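(* Let $\sigma \in (0,\infty]$ be fixed, let $u_\sigma \in \mathcal{T}_\sigma$ be the unique minimizer of $\mathcal{E}_\sigma$ over $\mathcal{T}_\sigma$, and for $h\in(0,h_0]$ let $u_{\sigma,h}$ be the unique minimizer of $\mathcal{E}_\sigma$ over $W_{\sigma,h}$. Assume in addition that there exists a function $Q_p \in C^0([0,\infty)^2)$, independent of $\sigma$, such that the first variation $\mathcal{F}_\sigma(u) \in \mathcal{T}_{-\sigma}$ at $u\in\mathcal{T}_\sigma$, defined by $\langle \mathcal{F}_\sigma(u), w\rangle := \frac{d}{dt}\mathcal{E}_\sigma(u+tw)\big|_{t=0}$ for $w\in\mathcal{T}_\sigma$, satisfies for every $v \in \mathcal{T}_\sigma$: $$\|\mathcal{F}_\sigma(u_\sigma)-\mathcal{F}_\sigma(v)\|_{\mathcal{T}_{-\sigma}} \le Q_p(\|u_\sigma\|_{\mathcal{T}_\sigma},\|v\|_{\mathcal{T}_\sigma}) \begin{cases} |\langle \mathcal{F}_\sigma(u_\sigma)-\mathcal{F}_\sigma(v), u_\sigma - v\rangle|^{\frac{p-1}{p}}, & 1<p<2,\\ |\langle \mathcal{F}_\sigma(u_\sigma)-\mathcal{F}_\sigma(v), u_\sigma - v\rangle|^{1/2}, & p\ge 2,\end{cases}$$ and $$\|u_\sigma - v\|_{\mathcal{T}_\sigma} \le Q_p(\|u_\sigma\|_{\mathcal{T}_\sigma},\|v\|_{\mathcal{T}_\sigma}) \begin{cases} |\langle \mathcal{F}_\sigma(u_\sigma)-\mathcal{F}_\sigma(v),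 u_\sigma - v\rangle|^{1/2}, & 1<p<2,\\ |\langle \mathcal{F}_\sigma(u_\sigma)-\mathcal{F}_\sigma(v), u_\sigma - v\rangle|^{1/p}, & p\ge 2.\end{cases}$$ Then $u_{\sigma,h} \to u_\sigma$ as $h \to 0$ in the strong topology of $\mathcal{T}_\sigma$, and there exists a constant $C>0$, independent of $h$, such that $$\|u_{\sigma,h}-u_\sigma\|_{\mathcal{T}_\sigma} \le C \begin{cases} \inf_{v_{\sigma,h}\in W_{\sigma,h}} \|v_{\sigma,h}-u_\sigma\|_{\mathcal{T}_\sigma}^{p/2}, & 1<p<2,\\ \inf_{v_{\sigma,h}\in W_{\sigma,h}} \|v_{\sigma,h}-u_\sigma\|_{\mathcal{T}_\sigma}^{2/p}, & p\ge 2.\end{cases}$$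
   Context: Setting: $\{\mathcal{T}_\sigma\}_{\sigma\in\mathbb{R}\cup\{\pm\infty\}}$ are reflexive Banach spaces with $\mathcal{T}_{-\sigma}=\mathcal{T}_\sigma^*$ and duality pairing $\langle\cdot,\cdot\rangle$. They satisfy: (uniform embedding) there is $M_1>0$ independent of $\sigma\in(0,\infty]$ with $M_1\|u\|_{\mathcal{T}_0}\le\|u\|_{\mathcal{T}_\sigma}$ for all $u\in\mathcal{T}_\sigma$; (asymptotically compact embedding) any family $\{v_\sigma\in\mathcal{T}_\sigma\}$ with $\|v_\sigma\|_{\mathcal{T}_\sigma}\le C$ is relatively compact in $\mathcal{T}_0$ with limit points in $\mathcal{T}_\infty$. The energies $\mathcal{E}_\sigma:\mathcal{T}_\sigma\to[0,\infty)$, $\sigma\in(0,\infty]$, are convex and $\mathcal{T}_\sigma$-weakly lower semicontinuous, and satisfy: (continuity) there is $\varphi\in C^0([0,\infty)^2)$ with $|\mathcal{E}_\sigma(u)-\mathcal{E}_\sigma(v)|\le\varphi(\|u\|_{\mathcal{T}_\sigma},\|v\|_{\mathcal{T}_\sigma})\|u-v\|_{\mathcal{T}_\sigma}$; (coercivity) there are $p\in(1,\infty)$, $\alpha>0$ independent of $\sigma$, and $\psi\in C^0([0,\infty))$ with $\psi(t)/t^p\to0$ as $t\to\infty$, such that $\alpha\|u\|_{\mathcal{T}_\sigma}^p\le\mathcal{E}_\sigma(u)+\psi(\|u\|_{\mathcal{T}_\sigma})$; (Gamma-convergence) the extensions of $\mathcal{E}_\sigma$ by $+\infty$ on $\mathcal{T}_0\setminus\mathcal{T}_\sigma$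 Gamma-converge in the strong topology of $\mathcal{T}_0$ to the extension of $\mathcal{E}_\infty$ as $\sigma\to\infty$. The spaces $W_{\sigma,h}\subset\mathcal{T}_\sigma$, $\sigma\in(0,\infty]$, $h\in(0,h_0]$, are finite-dimensional closed subspaces with $\dim\bigcup_{\sigma\in(0,\infty]}W_{\sigma,h}<\infty$, satisfying: for each $\sigma$, every $u\in\mathcal{T}_\sigma$ is the $\mathcal{T}_\sigma$-limit of some $u_n\in W_{\sigma,h_n}$ with $h_n\to0$; $W_{\infty,h}=\mathcal{T}_\infty\cap\bigcup_{\sigma\in(0,\infty]}W_{\sigma,h}$; and an asymptotic approximation property (Gamma-recovery sequences $v_{\sigma_n}$ for elements of $W_{\infty,h}$, resp. $\mathcal{T}_\infty$ when $h=0$, can be approximated in $\mathcal{T}_{\sigma_n}$ by elements of $W_{\sigma_n,h_n}$). Minimizers: $u_\sigma$ minimizes $\mathcal{E}_\sigma$ over $\mathcal{T}_\sigma$, and $u_{\sigma,h}$ minimizes $\mathcal{E}_\sigma$ over $W_{\sigma,h}$; they are unique by convexity. *)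

theory Defs
  imports "HOL-Analysis.Analysis"
begin

definition reflexive_space :: "'a::banach itself \<Rightarrow> bool" where
  "reflexive_space _ \<longleftrightarrow>
     (\<forall>\<Phi> :: ('a \<Rightarrow>\<^sub>L real) \<Rightarrow>\<^sub>L real. \<exists>x::'a. \<forall>f. blinfun_apply \<Phi> f = blinfun_apply f x)"

definition weak_conv :: "(nat \<Rightarrow> 'a::real_normed_vector) \<Rightarrow> 'a \<Rightarrow> bool" where
  "weak_conv X x \<longleftrightarrow> (\<forall>f :: 'a \<Rightarrow>\<^sub>L real. (\<lambda>n. blinfun_apply f (X n)) \<longlonglongrightarrow> blinfun_apply f x)"

definition weakly_lsc :: "('a::real_normed_vector \<Rightarrow> real) \<Rightarrow> bool" where
  "weakly_lsc E \<longleftrightarrow> (\<forall>X x. weak_conv X x \<longrightarrow> ereal (E x) \<le> liminf (\<lambda>n. ereal (E (X n))))"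

end

theory Submission
  imports Defs
begin

theorem theorem2p18:
  fixes E :: "'a::banach \<Rightarrow> real"
    and F :: "'a \<Rightarrow> ('a \<Rightarrow>\<^sub>L real)"
    and W :: "real \<Rightarrow> 'a set"
    and u :: 'a
    and uh :: "real \<Rightarrow> 'a"
    and \<phi> :: "real \<Rightarrow> real \<Rightarrow> real"
    and \<psi> :: "real \<Rightarrow> real"
    and Q :: "real \<Rightarrow> real \<Rightarrow> real"
    and p \<alpha> h0 :: real
  assumes refl: "reflexive_space TYPE('a)"
    and E_nonneg: "\<And>v. E v \<ge> 0"
    and E_convex: "convex_on UNIV E"
    and E_wlsc: "weakly_lsc E"
    and phi_cont: "continuous_on ({0..} \<times> {0..}) (\<lambda>(s, t). \<phi> s t)"
    and E_cont: "\<And>v w. \<bar>E v - E w\<bar> \<le> \<phi> (norm v) (norm w) * norm (v - w)"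
    and p_gt1: "p > 1"
    and alpha_pos: "\<alpha> > 0"
    and psi_cont: "continuous_on {0..} \<psi>"
    and psi_lim: "((\<lambda>t. \<psi> t / t powr p) \<longlongrightarrow> 0) at_top"
    and E_coercive: "\<And>v. \<alpha> * norm v powr p \<le> E v + \<psi> (norm v)"
    and F_deriv: "\<And>v w. ((\<lambda>t. E (v + t *\<^sub>R w)) has_real_derivative blinfun_apply (F v) w) (at 0)"
    and h0_pos: "h0 > 0"
    and W_subspace: "\<And>h. h \<in> {0<..h0} \<Longrightarrow> subspace (W h)"
    and W_findim: "\<And>h. h \<in> {0<..h0} \<Longrightarrow> \<exists>B. finite B \<and> W h = span B"
    and W_closed: "\<And>h. h \<in> {0<..h0} \<Longrightarrow> closed (W h)"
    and W_approx: "\<And>x hs. (\<forall>n. hs n \<in> {0<..h0}) \<Longrightarrow> hs \<longlonglongrightarrow> 0 \<Longrightarrow>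
                     \<exists>xs. (\<forall>n. xs n \<in> W (hs n)) \<and> xs \<longlonglongrightarrow> x"
    and u_min: "\<And>v. E u \<le> E v"
    and uh_in: "\<And>h. h \<in> {0<..h0} \<Longrightarrow> uh h \<in> W h"
    and uh_min: "\<And>h v. h \<in> {0<..h0} \<Longrightarrow> v \<in> W h \<Longrightarrow> E (uh h) \<le> E v"
    and Q_cont: "continuous_on ({0..} \<times> {0..}) (\<lambda>(s, t). Q s t)"
    and Q_dual: "\<And>v. norm (F u - F v) \<le> Q (norm u) (norm v) *
        (if p < 2 then \<bar>blinfun_apply (F u - F v) (u - v)\<bar> powr ((p - 1) / p)
         else \<bar>blinfun_apply (F u - F v) (u - v)\<bar> powr (1 / 2))"
    and Q_primal: "\<And>v. norm (u - v) \<le> Q (norm u) (norm v) *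
        (if p < 2 then \<bar>blinfun_apply (F u - F v) (u - v)\<bar> powr (1 / 2)
         else \<bar>blinfun_apply (F u - F v) (u - v)\<bar> powr (1 / p))"
  shows "(uh \<longlongrightarrow> u) (at_right 0) \<and>
    (\<exists>C>0. \<forall>h\<in>{0<..h0}. norm (uh h - u) \<le> C *
        (if p < 2 then (INF v\<in>W h. norm (v - u)) powr (p / 2)
         else (INF v\<in>W h. norm (v - u)) powr (2 / p)))"
proof -
  have Fu0: "F u = 0"
  proof (rule blinfun_eqI)
    fix w
    have "blinfun_apply (F u) w = 0"
      by (rule DERIV_local_min[OF F_deriv[of u w], where d=1]) (use u_min in auto)
    then show "blinfun_apply (F u) w = blinfun_apply 0 w" by simp
  qed
  have Fh0: "blinfun_apply (F (uh h)) w = 0" if h: "h \<in> {0<..h0}" and w: "w \<in> W h" for h w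
  proof (rule DERIV_local_min[OF F_deriv[of "uh h" w], where d=1])
    show "\<forall>y. \<bar>0 - y\<bar> < 1 \<longrightarrow> E (uh h + 0 *\<^sub>R w) \<le> E (uh h + y *\<^sub>R w)"
    proof (intro allI impI)
      fix y :: real
      have "uh h + y *\<^sub>R w \<in> W h"
        using W_subspace[OF h] uh_in[OF h] w by (simp add: subspace_add subspace_scale)
      then show "E (uh h + 0 *\<^sub>R w) \<le> E (uh h + y *\<^sub>R w)" using uh_min[OF h] by simp
    qed
  qed simp
  have "\<forall>\<^sub>F t in at_top. \<psi> t / t powr p < \<alpha> / 2"
    by (rule order_tendstoD(2)[OF psi_lim]) (use alpha_pos in simp)
  then obtain T where T: "\<And>t. t \<ge> T \<Longrightarrow> \<psi> t / t powr p < \<alpha> / 2"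
    by (auto simp: eventually_at_top_linorder)
  define T1 where "T1 = max T 1"
  define R where "R = max (max T1 ((2 * E 0 / \<alpha>) powr (1 / p))) (norm u)"
  have uh_bd: "norm (uh h) \<le> R" if h: "h \<in> {0<..h0}" for h
  proof (cases "norm (uh h) \<ge> T1")
    case True
    let ?t = "norm (uh h)"
    have tp: "?t powr p > 0" using True unfolding T1_def by auto
    have "\<psi> ?t / ?t powr p < \<alpha> / 2" using T True unfolding T1_def by auto
    then have ps: "\<psi> ?t < \<alpha> / 2 * ?t powr p" using tp by (simp add: divide_less_eq)
    have "E (uh h) \<le> E 0" using uh_min[OF h] W_subspace[OF h] by (simp add: subspace_0)
    then have "\<alpha> * ?t powr p \<le> E 0 + \<alpha> / 2 * ?t powr p" using E_coercive[of "uh h"] ps by linarith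
    then have "?t powr p \<le> 2 * E 0 / \<alpha>" using alpha_pos by (simp add: field_simps)
    then have "(?t powr p) powr (1/p) \<le> (2 * E 0 / \<alpha>) powr (1 / p)"
      by (intro powr_mono2) (use p_gt1 in auto)
    then have "?t \<le> (2 * E 0 / \<alpha>) powr (1 / p)" using p_gt1 by (simp add: powr_powr)
    then show ?thesis unfolding R_def by linarith
  next
    case False
    then show ?thesis unfolding R_def by linarith
  qed
  have "compact ((\<lambda>(s, t). Q s t) ` ({0..R} \<times> {0..R}))"
  proof (rule compact_continuous_image)
    show "continuous_on ({0..R} \<times> {0..R}) (\<lambda>(s, t). Q s t)"
      by (rule continuous_on_subset[OF Q_cont]) (simp add: subset_iff)
    show "compact ({0..R} \<times> {0..R})" by (intro compact_Times compact_Icc)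
  qed
  then have "bounded ((\<lambda>(s, t). Q s t) ` ({0..R} \<times> {0..R}))" by (rule compact_imp_bounded)
  then obtain B where B0: "\<forall>x\<in>(\<lambda>(s, t). Q s t) ` ({0..R} \<times> {0..R}). norm x \<le> B"
    unfolding bounded_iff by (elim exE)
  have B: "norm (Q s t) \<le> B" if "s \<in> {0..R}" "t \<in> {0..R}" for s t
  proof -
    have "Q s t \<in> (\<lambda>(s, t). Q s t) ` ({0..R} \<times> {0..R})"
      using that by (intro image_eqI[of _ _ "(s, t)"]) simp_all
    then show ?thesis using B0 by (rule bspec[rotated])
  qed
  define M where "M = max 1 B"
  have M_pos: "M > 0" unfolding M_def by simp
  have QM: "Q (norm u) (norm (uh h)) \<le> M" if h: "h \<in> {0<..h0}" for h
  proof -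
    have "norm u \<le> R" unfolding R_def by simp
    then have "norm (Q (norm u) (norm (uh h))) \<le> B" using uh_bd[OF h] by (intro B) simp_all
    then show ?thesis unfolding M_def by simp
  qed
  define D where "D h = (INF v\<in>W h. norm (v - u))" for h
  have D_low: "D h \<le> norm (w - u)" if h: "h \<in> {0<..h0}" and w: "w \<in> W h" for h w
    unfolding D_def by (rule cINF_lower[OF _ w]) (auto intro: bdd_belowI[where m=0])
  have D_nonneg: "D h \<ge> 0" if h: "h \<in> {0<..h0}" for h
    unfolding D_def using uh_in[OF h] by (intro cINF_greatest) auto
  define C where "C = (if p < 2 then M * M powr (p / 2) else M * M powr (2 / p))"
  have C_pos: "C > 0" unfolding C_def using M_pos by auto
  have est: "norm (uh h - u) \<le> C * (if p < 2 then D h powr (p / 2) else D h powr (2 / p))"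
    if h: "h \<in> {0<..h0}" for h
  proof -
    define v where "v = uh h"
    define A where "A = \<bar>blinfun_apply (F u - F v) (u - v)\<bar>"
    define N where "N = norm (F u - F v)"
    have v: "v \<in> W h" unfolding v_def by (rule uh_in[OF h])
    have AN: "A \<le> N * norm (w - u)" if w: "w \<in> W h" for w
    proof -
      have "w - v \<in> W h" using W_subspace[OF h] v w by (simp add: subspace_diff)
      then have z: "blinfun_apply (F v) (w - v) = 0" using Fh0[OF h] unfolding v_def by blast
      have "blinfun_apply (F v) (u - v) = blinfun_apply (F v) (u - w) + blinfun_apply (F v) (w - v)"
        by (simp add: blinfun.diff_right)
      then have "A = \<bar>blinfun_apply (F v) (u - w)\<bar>" unfolding A_def using z Fu0 by (simp add: blinfun.minus_left)
      also have "\<dots> \<le> norm (F v) * norm (u - w)" using norm_blinfun by (metis real_norm_def)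
      also have "\<dots> = N * norm (w - u)" unfolding N_def using Fu0 by (simp add: norm_minus_commute)
      finally show ?thesis .
    qed
    have A0: "A \<ge> 0" unfolding A_def by simp
    have N0: "N \<ge> 0" unfolding N_def by simp
    have AND: "A \<le> N * D h"
    proof (cases "N = 0")
      case True
      then show ?thesis using AN[OF v] A0 by simp
    next
      case False
      then have Np: "N > 0" using N0 by simp
      have "A / N \<le> D h" unfolding D_def using v
      proof (intro cINF_greatest)
        fix w assume "w \<in> W h"
        then show "A / N \<le> norm (w - u)" using AN Np by (simp add: divide_le_eq mult.commute)
      qed auto
      then show ?thesis using Np by (simp add: divide_le_eq mult.commute)
    qed
    have Qv: "Q (norm u) (norm v) \<le> M" unfolding v_def by (rule QM[OF h])
    have Dh: "D h \<ge> 0" by (rule D_nonneg[OF h])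
    have key: "A powr a \<le> M * D h" if a: "a > 0" "b \<ge> 0" "a + b = 1"
         and Nb: "N \<le> M * A powr b" for a b
    proof (cases "A = 0")
      case True
      then show ?thesis using a M_pos Dh by simp
    next
      case False
      then have Ap: "A > 0" using A0 by simp
      have "A powr b * A powr a = A" using a Ap by (simp add: powr_add[symmetric] add.commute)
      also have "\<dots> \<le> N * D h" by (rule AND)
      also have "\<dots> \<le> M * A powr b * D h" using Nb Dh by (simp add: mult_right_mono)
      finally have "A powr b * A powr a \<le> A powr b * (M * D h)" by (simp add: mult_ac)
      then show ?thesis using Ap by (simp add: mult_le_cancel_left_pos)
    qed
    show ?thesis
    proof (cases "p < 2")
      case True
      have "N \<le> Q (norm u) (norm v) * A powr ((p - 1) / p)"
        using Q_dual[of v] True unfolding N_def A_def by simp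
      also have "\<dots> \<le> M * A powr ((p - 1) / p)" using Qv by (simp add: mult_right_mono)
      finally have "A powr (1 / p) \<le> M * D h"
        using p_gt1 by (intro key[where b="(p - 1) / p"]) (auto simp: field_simps)
      then have "(A powr (1 / p)) powr (p / 2) \<le> (M * D h) powr (p / 2)"
        by (intro powr_mono2) (use p_gt1 in auto)
      then have A2: "A powr (1 / 2) \<le> M powr (p / 2) * D h powr (p / 2)"
        using p_gt1 M_pos Dh by (simp add: powr_powr powr_mult)
      have "norm (u - v) \<le> Q (norm u) (norm v) * A powr (1 / 2)"
        using Q_primal[of v] True unfolding A_def by simp
      also have "\<dots> \<le> M * A powr (1 / 2)" using Qv by (simp add: mult_right_mono)
      also have "\<dots> \<le> M * (M powr (p / 2) * D h powr (p / 2))"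
        using A2 M_pos by (simp add: mult_left_mono)
      finally show ?thesis using True unfolding C_def v_def by (simp add: norm_minus_commute mult_ac)
    next
      case False
      have "N \<le> Q (norm u) (norm v) * A powr (1 / 2)"
        using Q_dual[of v] False unfolding N_def A_def by simp
      also have "\<dots> \<le> M * A powr (1 / 2)" using Qv by (simp add: mult_right_mono)
      finally have "A powr (1 / 2) \<le> M * D h"
        by (intro key[where b="1 / 2"]) auto
      then have "(A powr (1 / 2)) powr (2 / p) \<le> (M * D h) powr (2 / p)"
        by (intro powr_mono2) (use p_gt1 in auto)
      then have A2: "A powr (1 / p) \<le> M powr (2 / p) * D h powr (2 / p)"
        using p_gt1 M_pos Dh by (simp add: powr_powr powr_mult)
      have "norm (u - v) \<le> Q (norm u) (norm v) * A powr (1 / p)"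
        using Q_primal[of v] False unfolding A_def by simp
      also have "\<dots> \<le> M * A powr (1 / p)" using Qv by (simp add: mult_right_mono)
      also have "\<dots> \<le> M * (M powr (2 / p) * D h powr (2 / p))"
        using A2 M_pos by (simp add: mult_left_mono)
      finally show ?thesis using False unfolding C_def v_def by (simp add: norm_minus_commute mult_ac)
    qed
  qed
  have D_lim: "(D \<longlongrightarrow> 0) (at_right 0)"
  proof (rule tendsto_at_right_sequentially[OF h0_pos])
    fix S :: "nat \<Rightarrow> real"
    assume S0: "\<And>n. 0 < S n" and S1: "\<And>n. S n < h0" and Slim: "S \<longlonglongrightarrow> 0"
    have Sin: "\<forall>n. S n \<in> {0<..h0}" using S0 S1 by (auto intro: less_imp_le)
    obtain xs where xs: "\<forall>n. xs n \<in> W (S n)" and xl: "xs \<longlonglongrightarrow> u"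
      using W_approx[OF Sin Slim] by blast
    have lim1: "(\<lambda>n. norm (xs n - u)) \<longlonglongrightarrow> 0"
      using xl by (simp only: Lim_null[of xs] tendsto_norm_zero_iff)
    have up: "\<And>n. D (S n) \<le> norm (xs n - u)"
      using D_low Sin xs by blast
    have lo: "\<And>n. 0 \<le> D (S n)"
      using D_nonneg Sin by blast
    show "(\<lambda>n. D (S n)) \<longlonglongrightarrow> 0"
      by (rule tendsto_sandwich[OF always_eventually always_eventually tendsto_const lim1])
        (use up lo in blast)+
  qed
  have ev: "\<forall>\<^sub>F h in at_right 0. h \<in> {0<..h0}"
    unfolding eventually_at_right_field using h0_pos by (auto intro!: exI[of _ h0])
  have D0: "\<forall>\<^sub>F h in at_right 0. 0 \<le> D h" using ev by (rule eventually_mono) (rule D_nonneg)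
  have G1: "((\<lambda>h. if p < 2 then D h powr (p / 2) else D h powr (2 / p)) \<longlongrightarrow> 0) (at_right 0)"
  proof (cases "p < 2")
    case True
    have "((\<lambda>h. D h powr (p / 2)) \<longlongrightarrow> 0) (at_right 0)"
      by (rule tendsto_zero_powrI[OF D_lim tendsto_const D0]) (use p_gt1 in simp)
    then show ?thesis using True by simp
  next
    case False
    have "((\<lambda>h. D h powr (2 / p)) \<longlongrightarrow> 0) (at_right 0)"
      by (rule tendsto_zero_powrI[OF D_lim tendsto_const D0]) (use p_gt1 in simp)
    then show ?thesis using False by simp
  qed
  have G: "((\<lambda>h. C * (if p < 2 then D h powr (p / 2) else D h powr (2 / p))) \<longlongrightarrow> 0) (at_right 0)"
    by (rule tendsto_mult_right_zero[OF G1])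
  have evb: "\<forall>\<^sub>F h in at_right 0. norm (uh h - u) \<le> C * (if p < 2 then D h powr (p / 2) else D h powr (2 / p))"
    using ev by (rule eventually_mono) (rule est)
  have "((\<lambda>h. uh h - u) \<longlongrightarrow> 0) (at_right 0)"
    by (rule Lim_null_comparison[OF evb G])
  then have conv: "(uh \<longlongrightarrow> u) (at_right 0)" by (simp only: Lim_null[of uh])
  have "\<forall>h\<in>{0<..h0}. norm (uh h - u) \<le> C * (if p < 2 then D h powr (p / 2) else D h powr (2 / p))"
    using est by blast
  then show ?thesis using conv C_pos unfolding D_def by blast
qed

end
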